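(* Let $G$ be a directed graph with vertices $s,t$ and $k\ge1$. The function $\hat d_{\mathrm{cov}}:U^k_{\mathrm{lr}}\to\mathbb N$, $\hat d_{\mathrm{cov}}(C)=\sum_{e\in E_{\mathrm{shr}}(C)}(\mu_e(C)-1)$, is submodular on the lattice $L^*$, i.e. $\hat d_{\mathrm{cov}}(C_1\vee C_2)+\hat d_{\mathrm{cov}}(C_1\wedge C_2)\le\hat d_{\mathrm{cov}}(C_1)+\hat d_{\mathrm{cov}}(C_2)$ for all $C_1,C_2\in L^*$.
   Context: An $s$-$t$ cut of a directed graph $G$ is a set $X\subseteq E(G)$ such that removing $X$ leaves no directed $s$-$t$ path; $\Gamma_G(s,t)$ is the set of $s$-$t$ cuts of minimum cardinality. Fix a maximum-size collection $\mathcal P$ of pairwise edge-disjoint directed $s$-$t$ paths (each minimum $s$-$t$ cut contains exactly one edge of each path in $\mathcal P$). For $X,Y\in\Gamma_G(s,t)$, $S_{\min}(X\cup Y)$ (resp. $S_{\max}(X\cup Y)$) consists, for each $p\in\mathcal P$, of the edge of $(X\cup Y)\cap p$ occurring first (resp. last) along $p$. $X\le Y$ means every directed $s$-$t$ path meets an edge of $X$ at or before an edge of $Y$. $U^k_{\mathrm{lr}}$ is the set of $k$-tuples $[X_1,\dots,X_k]$ of elements of $\Gamma_G(s,t)$ with $X_i\le X_j$ for all $i<j$. $L^*$ is the lattice on $U^k_{\mathrm{lr}}$ with componentwise order, join $[X_i]_i\vee[Y_i]_i=[S_{\max}(X_i\cup Y_i)]_i$ and meet $[X_i]_i\wedge[Y_i]_i=[S_{\min}(X_i\cup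 Y_i)]_i$. For $C=[X_1,\dots,X_k]$, $\mu_e(C)$ is the number of indices $i$ with $e\in X_i$, and $E_{\mathrm{shr}}(C)=\{e\in E(G):\mu_e(C)\ge2\}$. *)

theory Defs
  imports Main "Graph_Theory.Digraph" "Graph_Theory.Arc_Walk"
begin

definition st_path :: "('a,'b) pre_digraph \<Rightarrow> 'a \<Rightarrow> 'a \<Rightarrow> 'b list \<Rightarrow> bool" where
  "st_path G s t p \<longleftrightarrow> pre_digraph.apath G s p t"

definition is_st_cut :: "('a,'b) pre_digraph \<Rightarrow> 'a \<Rightarrow> 'a \<Rightarrow> 'b set \<Rightarrow> bool" where
  "is_st_cut G s t X \<longleftrightarrow> X \<subseteq> arcs G \<and> (\<forall>p. st_path G s t p \<longrightarrow> set p \<inter> X \<noteq> {})"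

definition min_cuts :: "('a,'b) pre_digraph \<Rightarrow> 'a \<Rightarrow> 'a \<Rightarrow> 'b set set" where
  "min_cuts G s t = {X. is_st_cut G s t X \<and> (\<forall>Y. is_st_cut G s t Y \<longrightarrow> card X \<le> card Y)}"

definition edge_disjoint_paths :: "('a,'b) pre_digraph \<Rightarrow> 'a \<Rightarrow> 'a \<Rightarrow> 'b list set \<Rightarrow> bool" where
  "edge_disjoint_paths G s t P \<longleftrightarrow>
     (\<forall>p\<in>P. st_path G s t p) \<and> (\<forall>p\<in>P. \<forall>q\<in>P. p \<noteq> q \<longrightarrow> set p \<inter> set q = {})"

definition max_edge_disjoint_paths :: "('a,'b) pre_digraph \<Rightarrow> 'a \<Rightarrow> 'a \<Rightarrow> 'b list set \<Rightarrow> bool" where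
  "max_edge_disjoint_paths G s t P \<longleftrightarrow> edge_disjoint_paths G s t P \<and> finite P \<and>
     (\<forall>Q. edge_disjoint_paths G s t Q \<and> finite Q \<longrightarrow> card Q \<le> card P)"

definition first_in :: "'b set \<Rightarrow> 'b list \<Rightarrow> 'b" where
  "first_in A p = p ! (LEAST i. i < length p \<and> p ! i \<in> A)"

definition last_in :: "'b set \<Rightarrow> 'b list \<Rightarrow> 'b" where
  "last_in A p = p ! (GREATEST i. i < length p \<and> p ! i \<in> A)"

definition S_min :: "'b list set \<Rightarrow> 'b set \<Rightarrow> 'b set" where
  "S_min P Z = (\<lambda>p. first_in Z p) ` P"

definition S_max :: "'b list set \<Rightarrow> 'b set \<Rightarrow> 'b set" where
  "S_max P Z = (\<lambda>p. last_in Z p) ` P"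

definition cut_le :: "('a,'b) pre_digraph \<Rightarrow> 'a \<Rightarrow> 'a \<Rightarrow> 'b set \<Rightarrow> 'b set \<Rightarrow> bool" where
  "cut_le G s t X Y \<longleftrightarrow> (\<forall>p. st_path G s t p \<longrightarrow>
     (\<exists>i<length p. p ! i \<in> X \<and> (\<forall>j<i. p ! j \<notin> Y)))"

definition U_lr :: "('a,'b) pre_digraph \<Rightarrow> 'a \<Rightarrow> 'a \<Rightarrow> nat \<Rightarrow> 'b set list set" where
  "U_lr G s t k = {C. length C = k \<and> set C \<subseteq> min_cuts G s t \<and>
     (\<forall>i j. i < j \<and> j < k \<longrightarrow> cut_le G s t (C ! i) (C ! j))}"

definition tuple_join :: "'b list set \<Rightarrow> 'b set list \<Rightarrow> 'b set list \<Rightarrow> 'b set list" where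
  "tuple_join P C D = map2 (\<lambda>X Y. S_max P (X \<union> Y)) C D"

definition tuple_meet :: "'b list set \<Rightarrow> 'b set list \<Rightarrow> 'b set list \<Rightarrow> 'b set list" where
  "tuple_meet P C D = map2 (\<lambda>X Y. S_min P (X \<union> Y)) C D"

definition mult :: "'b \<Rightarrow> 'b set list \<Rightarrow> nat" where
  "mult e C = length (filter (\<lambda>X. e \<in> X) C)"

definition E_shr :: "('a,'b) pre_digraph \<Rightarrow> 'b set list \<Rightarrow> 'b set" where
  "E_shr G C = {e \<in> arcs G. 2 \<le> mult e C}"

definition d_cov :: "('a,'b) pre_digraph \<Rightarrow> 'b set list \<Rightarrow> nat" where
  "d_cov G C = (\<Sum>e\<in>E_shr G C. mult e C - 1)"

end

theory Submission
  imports Defs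
begin


definition outc :: "('a,'b) pre_digraph \<Rightarrow> 'b set \<Rightarrow> 'a \<Rightarrow> nat" where
  "outc H F w = card {e\<in>F. tail H e = w}"
definition incc :: "('a,'b) pre_digraph \<Rightarrow> 'b set \<Rightarrow> 'a \<Rightarrow> nat" where
  "incc H F w = card {e\<in>F. head H e = w}"
definition netf :: "('a,'b) pre_digraph \<Rightarrow> 'b set \<Rightarrow> 'a \<Rightarrow> int" where
  "netf H F w = int (outc H F w) - int (incc H F w)"

lemma (in wf_digraph) apath_counts:
  assumes "apath u p v"
  shows "card {e\<in>set p. tail G e = w} = (if w \<in> set (awalk_verts u p) \<and> w \<noteq> v then 1 else 0)
     \<and> card {e\<in>set p. head G e = w} = (if w \<in> set (awalk_verts u p) \<and> w \<noteq> u then 1 else 0)"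
  using assms
proof (induction p arbitrary: u)
  case Nil
  then show ?case by (auto simp: apath_Nil_iff)
next
  case (Cons e es)
  from Cons.prems have e: "e \<in> arcs G" "tail G e = u" and ap: "apath (head G e) es v"
    and nu: "u \<notin> set (awalk_verts (head G e) es)" by (auto simp: apath_Cons_iff)
  have ne: "e \<notin> set es" using nu e(2) awalk_verts_arc1 by metis
  have vin: "v \<in> set (awalk_verts (head G e) es)"
    using ap by (metis apath_def awalkE' last_in_set awalk_verts_non_Nil)
  have hin: "head G e \<in> set (awalk_verts (head G e) es)"
    using ap hd_in_awalk_verts(2) by blast
  have uv: "u \<noteq> v" using vin nu by auto
  note IH = Cons.IH[OF ap]
  have s1: "{x\<in>set (e#es). tail G x = w} = (if tail G e = w then insert e {x\<in>set es. tail G x = w} else {x\<in>set es. tail G x = w})"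
    by auto
  have s2: "{x\<in>set (e#es). head G x = w} = (if head G e = w then insert e {x\<in>set es. head G x = w} else {x\<in>set es. head G x = w})"
    by auto
  have c1: "card {x\<in>set (e#es). tail G x = w} = (if tail G e = w then 1 else 0) + card {x\<in>set es. tail G x = w}"
    unfolding s1 using ne by auto
  have c2: "card {x\<in>set (e#es). head G x = w} = (if head G e = w then 1 else 0) + card {x\<in>set es. head G x = w}"
    unfolding s2 using ne by auto
  show ?case
    unfolding c1 c2 using IH e nu uv hin by auto
qed

lemma (in wf_digraph) apath_net:
  assumes "apath u p v" "u \<noteq> v"
  shows "netf G (set p) w = (if w = u then 1 else if w = v then -1 else 0)"
proof -
  have "u \<in> set (awalk_verts u p)" using assms hd_in_awalk_verts(2) by blast
  moreover have "v \<in> set (awalk_verts u p)"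
    using assms by (metis apath_def awalkE' last_in_set awalk_verts_non_Nil)
  ultimately show ?thesis using apath_counts[OF assms(1), of w] assms(2)
    unfolding netf_def outc_def incc_def by auto
qed


lemma sum_fiber_card:
  assumes "finite R" "finite F"
  shows "(\<Sum>v\<in>R. card {e\<in>F. f e = v}) = card {e\<in>F. f e \<in> R}"
proof -
  have "{e\<in>F. f e \<in> R} = (\<Union>v\<in>R. {e\<in>F. f e = v})" by auto
  moreover have "card (\<Union>v\<in>R. {e\<in>F. f e = v}) = (\<Sum>v\<in>R. card {e\<in>F. f e = v})"
    by (rule card_UN_disjoint) (use assms in auto)
  ultimately show ?thesis by simp
qed

lemma netf_cut_sum:
  assumes "finite R" "finite F"
  shows "(\<Sum>v\<in>R. netf H F v) = int (card {e\<in>F. tail H e \<in> R \<and> head H e \<notin> R})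
          - int (card {e\<in>F. head H e \<in> R \<and> tail H e \<notin> R})"
proof -
  have a: "(\<Sum>v\<in>R. netf H F v) = int (card {e\<in>F. tail H e \<in> R}) - int (card {e\<in>F. head H e \<in> R})"
    unfolding netf_def outc_def incc_def sum_subtractf
    using sum_fiber_card[OF assms, of "tail H"] sum_fiber_card[OF assms, of "head H"]
    by (metis (no_types, lifting) of_nat_sum sum.cong)
  have b: "{e\<in>F. tail H e \<in> R} = {e\<in>F. tail H e \<in> R \<and> head H e \<in> R} \<union> {e\<in>F. tail H e \<in> R \<and> head H e \<notin> R}" by auto
  have c: "{e\<in>F. head H e \<in> R} = {e\<in>F. tail H e \<in> R \<and> head H e \<in> R} \<union> {e\<in>F. head H e \<in> R \<and> tail H e \<notin> R}" by auto
  have b': "card {e\<in>F. tail H e \<in> R} = card {e\<in>F. tail H e \<in> R \<and> head H e \<in> R} + card {e\<in>F. tail H e \<in> R \<and> head H e \<notin> R}"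
    unfolding b by (rule card_Un_disjoint) (use assms in auto)
  have c': "card {e\<in>F. head H e \<in> R} = card {e\<in>F. tail H e \<in> R \<and> head H e \<in> R} + card {e\<in>F. head H e \<in> R \<and> tail H e \<notin> R}"
    unfolding c by (rule card_Un_disjoint) (use assms in auto)
  show ?thesis unfolding a b' c' by simp
qed

lemma netf_Un:
  assumes "finite A" "finite B" "A \<inter> B = {}"
  shows "netf H (A \<union> B) w = netf H A w + netf H B w"
proof -
  have 1: "{e\<in>A \<union> B. tail H e = w} = {e\<in>A. tail H e = w} \<union> {e\<in>B. tail H e = w}" by auto
  have 2: "{e\<in>A \<union> B. head H e = w} = {e\<in>A. head H e = w} \<union> {e\<in>B. head H e = w}" by auto
  have "card ({e\<in>A. tail H e = w} \<union> {e\<in>B. tail H e = w}) = card {e\<in>A. tail H e = w} + card {e\<in>B. tail H e = w}"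
    by (rule card_Un_disjoint) (use assms in auto)
  moreover have "card ({e\<in>A. head H e = w} \<union> {e\<in>B. head H e = w}) = card {e\<in>A. head H e = w} + card {e\<in>B. head H e = w}"
    by (rule card_Un_disjoint) (use assms in auto)
  ultimately show ?thesis unfolding netf_def outc_def incc_def 1 2 by simp
qed

lemma netf_diff:
  assumes "finite F" "A \<subseteq> F"
  shows "netf H (F - A) w = netf H F w - netf H A w"
proof -
  have "F = (F - A) \<union> A" using assms by auto
  then have "netf H F w = netf H (F - A) w + netf H A w"
    using netf_Un[of "F - A" A H w] assms by (metis Diff_disjoint Int_commute finite_Diff finite_subset)
  then show ?thesis by simp
qed

lemma netf_UN:
  assumes "finite P" "\<forall>p\<in>P. finite (S p)" "\<forall>p\<in>P. \<forall>q\<in>P. p \<noteq> q \<longrightarrow> S p \<inter> S q = {}"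
  shows "netf H (\<Union>p\<in>P. S p) w = (\<Sum>p\<in>P. netf H (S p) w)"
proof -
  have 1: "{e\<in>(\<Union>p\<in>P. S p). tail H e = w} = (\<Union>p\<in>P. {e\<in>S p. tail H e = w})" by auto
  have 2: "{e\<in>(\<Union>p\<in>P. S p). head H e = w} = (\<Union>p\<in>P. {e\<in>S p. head H e = w})" by auto
  have "card (\<Union>p\<in>P. {e\<in>S p. tail H e = w}) = (\<Sum>p\<in>P. card {e\<in>S p. tail H e = w})"
    by (rule card_UN_disjoint) (use assms in auto)
  moreover have "card (\<Union>p\<in>P. {e\<in>S p. head H e = w}) = (\<Sum>p\<in>P. card {e\<in>S p. head H e = w})"
    by (rule card_UN_disjoint) (use assms in auto)
  ultimately show ?thesis unfolding netf_def outc_def incc_def 1 2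
    by (simp add: sum_subtractf)
qed


lemma (in fin_digraph) decomp:
  assumes "s \<noteq> t" "s \<in> verts G"
  shows "F \<subseteq> arcs G \<Longrightarrow> (\<forall>v. v \<noteq> s \<and> v \<noteq> t \<longrightarrow> netf G F v = 0) \<Longrightarrow> netf G F s = int m
    \<Longrightarrow> \<exists>Q. edge_disjoint_paths G s t Q \<and> finite Q \<and> card Q = m \<and> (\<forall>q\<in>Q. set q \<subseteq> F)"
proof (induction m arbitrary: F)
  case 0
  then show ?case by (intro exI[of _ "{}"]) (auto simp: edge_disjoint_paths_def)
next
  case (Suc m)
  have finF: "finite F" using Suc.prems(1) finite_subset finite_arcs by blast
  define R where "R = {v. \<exists>p. awalk s p v \<and> set p \<subseteq> F}"
  have sR: "s \<in> R" unfolding R_def using assms(2) by (intro CollectI exI[of _ "[]"]) (auto simp: awalk_Nil_iff)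
  have RV: "R \<subseteq> verts G" unfolding R_def using awalk_last_in_verts by blast
  have finR: "finite R" using RV finite_subset finite_verts by blast
  have tR: "t \<in> R"
  proof (rule ccontr)
    assume tn: "t \<notin> R"
    have "(\<Sum>v\<in>R. netf G F v) = netf G F s + (\<Sum>v\<in>R - {s}. netf G F v)"
      using sR finR by (simp add: sum.remove)
    also have "(\<Sum>v\<in>R - {s}. netf G F v) = 0"
      using Suc.prems(2) tn by (intro sum.neutral) auto
    finally have 1: "(\<Sum>v\<in>R. netf G F v) = int (Suc m)" using Suc.prems(3) by simp
    have "head G e \<in> R" if e: "e \<in> F" "tail G e \<in> R" for e
    proof -
      from e obtain p where p: "awalk s p (tail G e)" "set p \<subseteq> F" unfolding R_def by blast
      have "awalk s (p @ [e]) (head G e)"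
        using p e Suc.prems(1) by (auto simp: awalk_Cons_iff awalk_Nil_iff)
      then show "head G e \<in> R" unfolding R_def using p e by (intro CollectI exI[of _ "p @ [e]"]) auto
    qed
    then have emp: "{e\<in>F. tail G e \<in> R \<and> head G e \<notin> R} = {}" by auto
    have "(\<Sum>v\<in>R. netf G F v) \<le> 0" using netf_cut_sum[OF finR finF, of G] unfolding emp by simp
    then show False using 1 by simp
  qed
  then obtain p0 where p0: "awalk s p0 t" "set p0 \<subseteq> F" unfolding R_def by blast
  define p where "p = awalk_to_apath p0"
  have ap: "apath s p t" unfolding p_def using apath_awalk_to_apath[OF p0(1)] .
  have pF: "set p \<subseteq> F" unfolding p_def using awalk_to_apath_subset[OF p0(1)] p0(2) by blast
  define F' where "F' = F - set p"
  have net': "netf G F' v = netf G F v - netf G (set p) v" for v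
    unfolding F'_def by (rule netf_diff[OF finF pF])
  have pn: "netf G (set p) v = (if v = s then 1 else if v = t then -1 else 0)" for v
    using apath_net[OF ap assms(1)] .
  have "F' \<subseteq> arcs G" using Suc.prems(1) unfolding F'_def by blast
  moreover have "\<forall>v. v \<noteq> s \<and> v \<noteq> t \<longrightarrow> netf G F' v = 0" using Suc.prems(2) net' pn by simp
  moreover have "netf G F' s = int m" using Suc.prems(3) net' pn by simp
  ultimately obtain Q where Q: "edge_disjoint_paths G s t Q" "finite Q" "card Q = m" "\<forall>q\<in>Q. set q \<subseteq> F'"
    using Suc.IH by blast
  have pne: "p \<noteq> []" using ap assms(1) by (auto simp: apath_Nil_iff)
  have pQ: "p \<notin> Q"
  proof
    assume "p \<in> Q"
    then have "set p \<subseteq> F'" using Q(4) by blast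
    then have "set p = {}" unfolding F'_def by (metis Diff_disjoint inf.orderE)
    then show False using pne by simp
  qed
  have "edge_disjoint_paths G s t (insert p Q)"
    unfolding edge_disjoint_paths_def
  proof (intro conjI ballI impI)
    fix q assume "q \<in> insert p Q" then show "st_path G s t q"
      using Q(1) ap unfolding edge_disjoint_paths_def st_path_def by auto
  next
    fix q r assume qr: "q \<in> insert p Q" "r \<in> insert p Q" "q \<noteq> r"
    have dq: "set q \<inter> set p = {}" if "q \<in> Q" for q using Q(4) that unfolding F'_def by blast
    show "set q \<inter> set r = {}"
    proof (cases "q = p")
      case True then show ?thesis using qr dq by auto
    next
      case False
      show ?thesis
      proof (cases "r = p")
        case True then show ?thesis using qr dq False by auto
      next
        case False2: False
        then show ?thesis using qr False Q(1) unfolding edge_disjoint_paths_def by auto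
      qed
    qed
  qed
  moreover have "card (insert p Q) = Suc m" using Q(2,3) pQ by simp
  moreover have "\<forall>q\<in>insert p Q. set q \<subseteq> F" using Q(4) pF unfolding F'_def by blast
  ultimately show ?case using Q(2) by blast
qed


lemma (in wf_digraph) walk_leaves:
  "awalk u p v \<Longrightarrow> u \<in> R \<Longrightarrow> v \<notin> R \<Longrightarrow> \<exists>e\<in>set p. tail G e \<in> R \<and> head G e \<notin> R"
proof (induction p arbitrary: u)
  case Nil then show ?case by (auto simp: awalk_Nil_iff)
next
  case (Cons e es)
  then have "tail G e = u" "awalk (head G e) es v" by (auto simp: awalk_Cons_iff)
  then show ?case using Cons by (cases "head G e \<in> R") auto
qed

lemma (in fin_digraph) small_cut:
  assumes sV: "s \<in> verts G" and st: "s \<noteq> t" and mx: "max_edge_disjoint_paths G s t P"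
  shows "\<exists>Z. is_st_cut G s t Z \<and> card Z \<le> card P"
proof -
  have finP: "finite P" and edp: "edge_disjoint_paths G s t P" using mx unfolding max_edge_disjoint_paths_def by auto
  have apP: "apath s p t" if "p \<in> P" for p using edp that unfolding edge_disjoint_paths_def st_path_def by auto
  have disP: "\<forall>p\<in>P. \<forall>q\<in>P. p \<noteq> q \<longrightarrow> set p \<inter> set q = {}" using edp unfolding edge_disjoint_paths_def by auto
  define F where "F = (\<Union>p\<in>P. set p)"
  have FA: "F \<subseteq> arcs G" unfolding F_def using apP by (auto simp: apath_def awalk_def)
  have finF: "finite F" using FA finite_subset finite_arcs by blast
  have netF: "netf G F w = (\<Sum>p\<in>P. (if w = s then 1 else if w = t then -1 else 0))" for w
    unfolding F_def using netf_UN[OF finP _ disP, of G w] apath_net[OF apP st] by simp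
  have netFs: "netf G F s = int (card P)" using netF[of s] by simp
  have netFo: "netf G F w = 0" if "w \<noteq> s" "w \<noteq> t" for w using netF[of w] that by simp
  define Rg :: "('a, 'b \<times> bool) pre_digraph" where "Rg = \<lparr> verts = verts G,
     arcs = {(e,b). e \<in> arcs G \<and> (b = (e \<notin> F))},
     tail = (\<lambda>(e,b). if b then tail G e else head G e),
     head = (\<lambda>(e,b). if b then head G e else tail G e) \<rparr>"
  interpret R: wf_digraph Rg by unfold_locales (auto simp: Rg_def)
  have vR: "verts Rg = verts G" by (simp add: Rg_def)
  define R where "R = {v. \<exists>p. R.awalk s p v}"
  have sR: "s \<in> R" unfolding R_def using sV by (intro CollectI exI[of _ "[]"]) (auto simp: R.awalk_Nil_iff vR)
  have RV: "R \<subseteq> verts G" unfolding R_def using R.awalk_last_in_verts vR by auto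
  have finR: "finite R" using RV finite_subset finite_verts by blast
  have stepR: "v \<in> R" if "u \<in> R" "a \<in> arcs Rg" "tail Rg a = u" "head Rg a = v" for u v a
  proof -
    from that obtain p where p: "R.awalk s p u" unfolding R_def by blast
    have "R.awalk s (p @ [a]) v" using p that by (auto simp: R.awalk_Cons_iff R.awalk_Nil_iff)
    then show ?thesis unfolding R_def by blast
  qed
  show ?thesis
  proof (cases "t \<in> R")
    case False
    define Z where "Z = {e\<in>arcs G. tail G e \<in> R \<and> head G e \<notin> R}"
    have cut: "is_st_cut G s t Z"
      unfolding is_st_cut_def
    proof (intro conjI allI impI)
      show "Z \<subseteq> arcs G" unfolding Z_def by auto
    next
      fix p assume "st_path G s t p"
      then have "awalk s p t" unfolding st_path_def apath_def by auto
      then obtain e where "e \<in> set p" "tail G e \<in> R" "head G e \<notin> R"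
        using walk_leaves[of s p t R] sR False by blast
      moreover have "e \<in> arcs G" using \<open>awalk s p t\<close> \<open>e \<in> set p\<close> by auto
      ultimately show "set p \<inter> Z \<noteq> {}" unfolding Z_def by auto
    qed
    have ZF: "Z = {e\<in>F. tail G e \<in> R \<and> head G e \<notin> R}"
    proof -
      have "e \<in> F" if "e \<in> arcs G" "tail G e \<in> R" "head G e \<notin> R" for e
      proof (rule ccontr)
        assume "e \<notin> F"
        then have "(e, True) \<in> arcs Rg" using that by (simp add: Rg_def)
        then have "head G e \<in> R" using stepR[of "tail G e" "(e,True)" "head G e"] that by (simp add: Rg_def)
        then show False using that by simp
      qed
      then show ?thesis unfolding Z_def using FA by auto
    qed
    have emp: "{e\<in>F. head G e \<in> R \<and> tail G e \<notin> R} = {}"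
    proof -
      have "tail G e \<in> R" if "e \<in> F" "head G e \<in> R" for e
      proof -
        have "(e, False) \<in> arcs Rg" using that FA by (auto simp add: Rg_def)
        then show ?thesis using stepR[of "head G e" "(e,False)" "tail G e"] that by (simp add: Rg_def)
      qed
      then show ?thesis by auto
    qed
    have "(\<Sum>v\<in>R. netf G F v) = netf G F s + (\<Sum>v\<in>R - {s}. netf G F v)"
      using sR finR by (simp add: sum.remove)
    also have "(\<Sum>v\<in>R - {s}. netf G F v) = 0"
      using netFo False by (intro sum.neutral) auto
    finally have "int (card Z) = int (card P)"
      using netf_cut_sum[OF finR finF, of G] netFs unfolding ZF emp by simp
    then show ?thesis using cut by auto
  next
    case True
    then obtain p0 where p0: "R.awalk s p0 t" unfolding R_def by blast
    define p where "p = R.awalk_to_apath p0"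
    have ap: "R.apath s p t" unfolding p_def using R.apath_awalk_to_apath[OF p0] .
    have pA: "set p \<subseteq> arcs Rg" using ap by (auto simp: R.apath_def R.awalk_def)
    define A where "A = {e. (e,True) \<in> set p}"
    define B where "B = {e. (e,False) \<in> set p}"
    have AF: "A \<inter> F = {}" "A \<subseteq> arcs G" using pA unfolding A_def by (auto simp: Rg_def)
    have BF: "B \<subseteq> F" using pA unfolding B_def by (auto simp: Rg_def)
    have finA: "finite A" using AF finite_subset finite_arcs by blast
    have finB: "finite B" using BF finF finite_subset by blast
    define F' where "F' = (F - B) \<union> A"
    have netF': "netf G F' w = netf G F w - netf G B w + netf G A w" for w
    proof -
      have "netf G F' w = netf G (F - B) w + netf G A w"
        unfolding F'_def by (rule netf_Un) (use finF finA AF in auto)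
      then show ?thesis using netf_diff[OF finF BF] by simp
    qed
    have outR: "outc Rg (set p) w = outc G A w + incc G B w" for w
    proof -
      have "{x\<in>set p. tail Rg x = w} = (\<lambda>e. (e,True)) ` {e\<in>A. tail G e = w} \<union> (\<lambda>e. (e,False)) ` {e\<in>B. head G e = w}"
        unfolding A_def B_def by (auto simp: Rg_def image_iff; case_tac b; auto)
      moreover have "card ((\<lambda>e. (e,True)) ` {e\<in>A. tail G e = w} \<union> (\<lambda>e. (e,False)) ` {e\<in>B. head G e = w})
          = card {e\<in>A. tail G e = w} + card {e\<in>B. head G e = w}"
        using finA finB by (subst card_Un_disjoint) (auto simp: card_image inj_on_def)
      ultimately show ?thesis unfolding outc_def incc_def by simp
    qed
    have inR: "incc Rg (set p) w = incc G A w + outc G B w" for w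
    proof -
      have "{x\<in>set p. head Rg x = w} = (\<lambda>e. (e,True)) ` {e\<in>A. head G e = w} \<union> (\<lambda>e. (e,False)) ` {e\<in>B. tail G e = w}"
        unfolding A_def B_def by (auto simp: Rg_def image_iff; case_tac b; auto)
      moreover have "card ((\<lambda>e. (e,True)) ` {e\<in>A. head G e = w} \<union> (\<lambda>e. (e,False)) ` {e\<in>B. tail G e = w})
          = card {e\<in>A. head G e = w} + card {e\<in>B. tail G e = w}"
        using finA finB by (subst card_Un_disjoint) (auto simp: card_image inj_on_def)
      ultimately show ?thesis unfolding outc_def incc_def by simp
    qed
    have netR: "netf Rg (set p) w = netf G A w - netf G B w" for w
      unfolding netf_def outR inR by simp
    have pn: "netf Rg (set p) w = (if w = s then 1 else if w = t then -1 else 0)" for w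
      using R.apath_net[OF ap st] .
    have "F' \<subseteq> arcs G" unfolding F'_def using FA AF by auto
    moreover have "\<forall>v. v \<noteq> s \<and> v \<noteq> t \<longrightarrow> netf G F' v = 0"
      using netF' netR pn netFo by (metis add.commute add_0 diff_add_cancel diff_add_eq)
    moreover have "netf G F' s = int (Suc (card P))"
      using netF' netR[of s] pn[of s] netFs by simp
    ultimately obtain Q where Q: "edge_disjoint_paths G s t Q" "finite Q" "card Q = Suc (card P)"
      using decomp[OF st sV] by blast
    then have "card Q \<le> card P" using mx unfolding max_edge_disjoint_paths_def by blast
    then show ?thesis using Q(3) by simp
  qed
qed



lemma img_step:
  fixes f :: "nat \<Rightarrow> nat"
  assumes mono: "\<forall>i j. i \<le> j \<longrightarrow> j \<le> k \<longrightarrow> f i \<le> f j"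
  shows "card (f ` {..<Suc k}) = card (f ` {..<k}) + (if 0 < k \<and> f (k - 1) = f k then 0 else 1)"
proof -
  have e: "{..<Suc k} = insert k {..<k}" by auto
  have "f k \<in> f ` {..<k} \<longleftrightarrow> (0 < k \<and> f (k - 1) = f k)"
  proof
    assume "f k \<in> f ` {..<k}"
    then obtain i where i: "i < k" "f k = f i" by auto
    then have "f i \<le> f (k - 1)" "f (k - 1) \<le> f k"
      using mono[rule_format, of i "k - 1"] mono[rule_format, of "k - 1" k] by auto
    then show "0 < k \<and> f (k - 1) = f k" using i by auto
  next
    assume "0 < k \<and> f (k - 1) = f k"
    then show "f k \<in> f ` {..<k}" by (metis diff_less image_eqI lessThan_iff zero_less_one)
  qed
  then show ?thesis unfolding e by (auto simp: card_insert_if)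
qed

lemma mono_card_ineq:
  fixes a b :: "nat \<Rightarrow> nat"
  assumes ma: "\<forall>i j. i \<le> j \<longrightarrow> j < K \<longrightarrow> a i \<le> a j"
    and mb: "\<forall>i j. i \<le> j \<longrightarrow> j < K \<longrightarrow> b i \<le> b j"
  shows "k \<le> K \<Longrightarrow> card (a ` {..<k}) + card (b ` {..<k})
     \<le> card ((\<lambda>i. max (a i) (b i)) ` {..<k}) + card ((\<lambda>i. min (a i) (b i)) ` {..<k})"
proof (induction k)
  case 0 then show ?case by simp
next
  case (Suc k)
  let ?M = "\<lambda>i. max (a i) (b i)" and ?m = "\<lambda>i. min (a i) (b i)"
  have ma': "\<forall>i j. i \<le> j \<longrightarrow> j \<le> k \<longrightarrow> a i \<le> a j" using ma Suc.prems by auto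
  have mb': "\<forall>i j. i \<le> j \<longrightarrow> j \<le> k \<longrightarrow> b i \<le> b j" using mb Suc.prems by auto
  have mM: "\<forall>i j. i \<le> j \<longrightarrow> j \<le> k \<longrightarrow> ?M i \<le> ?M j" using ma' mb' by (meson max.mono)
  have mm: "\<forall>i j. i \<le> j \<longrightarrow> j \<le> k \<longrightarrow> ?m i \<le> ?m j" using ma' mb' by (meson min.mono)
  have IH: "card (a ` {..<k}) + card (b ` {..<k}) \<le> card (?M ` {..<k}) + card (?m ` {..<k})"
    using Suc by simp
  have "0 < k \<Longrightarrow> a (k - 1) \<le> a k \<and> b (k - 1) \<le> b k" using ma' mb' by auto
  then show ?case
    unfolding img_step[OF ma'] img_step[OF mb'] img_step[OF mM] img_step[OF mm]
    using IH by (auto simp: max_def min_def split: if_splits)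
qed

lemma count_sum:
  fixes a :: "nat \<Rightarrow> nat"
  assumes "\<forall>i<k. a i < n"
  shows "(\<Sum>j<n. card {i. i < k \<and> a i = j} - 1) = k - card (a ` {..<k})"
proof -
  let ?A = "a ` {..<k}"
  have sub: "?A \<subseteq> {..<n}" using assms by auto
  have emp: "j \<notin> ?A \<Longrightarrow> {i. i < k \<and> a i = j} = {}" for j by auto
  have "(\<Sum>j<n. card {i. i < k \<and> a i = j} - 1) = (\<Sum>j\<in>?A. card {i. i < k \<and> a i = j} - 1)"
    apply (rule sum.mono_neutral_right)
      apply simp
     apply (rule sub)
    apply (intro ballI)
    apply (subst emp)
     apply auto
    done
  also have "\<dots> = (\<Sum>j\<in>?A. card {i. i < k \<and> a i = j}) - (\<Sum>j\<in>?A. 1)"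
  proof (rule sum_subtractf_nat)
    fix j assume "j \<in> ?A"
    then obtain i where "i < k" "a i = j" by auto
    then have "{i. i < k \<and> a i = j} \<noteq> {}" by auto
    moreover have "finite {i. i < k \<and> a i = j}" by simp
    ultimately show "1 \<le> card {i. i < k \<and> a i = j}" by (simp add: Suc_le_eq card_gt_0_iff)
  qed
  also have "(\<Sum>j\<in>?A. card {i. i < k \<and> a i = j}) = k"
  proof -
    have "(\<Sum>j\<in>?A. card {i. i < k \<and> a i = j}) = (\<Sum>j\<in>?A. card {i\<in>{..<k}. a i = j})" by simp
    also have "\<dots> = card (\<Union>j\<in>?A. {i\<in>{..<k}. a i = j})"
      by (rule card_UN_disjoint[symmetric]) auto
    also have "(\<Union>j\<in>?A. {i\<in>{..<k}. a i = j}) = {..<k}" by auto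
    finally show ?thesis by simp
  qed
  finally show ?thesis by simp
qed


definition pos :: "'b set \<Rightarrow> 'b list \<Rightarrow> nat" where
  "pos X p = (LEAST i. i < length p \<and> p ! i \<in> X)"

lemma pos_unique:
  assumes "distinct p" "X \<inter> set p = {e}"
  shows "pos X p < length p \<and> p ! pos X p = e \<and> (\<forall>i<length p. p ! i \<in> X \<longleftrightarrow> i = pos X p)"
proof -
  have "e \<in> set p" using assms by auto
  then obtain j where j: "j < length p" "p ! j = e" by (auto simp: in_set_conv_nth)
  have iff: "\<forall>i<length p. p ! i \<in> X \<longleftrightarrow> i = j"
  proof (intro allI impI)
    fix i assume i: "i < length p"
    have "p ! i \<in> X \<longleftrightarrow> p ! i = e" using assms(2) nth_mem[OF i] by blast
    also have "\<dots> \<longleftrightarrow> i = j" using j i assms(1) by (metis nth_eq_iff_index_eq)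
    finally show "p ! i \<in> X \<longleftrightarrow> i = j" .
  qed
  have "pos X p = j" unfolding pos_def
    by (rule Least_equality) (use iff j assms in auto)
  then show ?thesis using iff j by auto
qed

lemma first_last:
  assumes "distinct p" "X \<inter> set p = {x}" "Y \<inter> set p = {y}"
  shows "first_in (X \<union> Y) p = p ! min (pos X p) (pos Y p)
       \<and> last_in (X \<union> Y) p = p ! max (pos X p) (pos Y p)"
proof -
  note A = pos_unique[OF assms(1,2)] and B = pos_unique[OF assms(1,3)]
  have iff: "(i < length p \<and> p ! i \<in> X \<union> Y) \<longleftrightarrow> (i = pos X p \<or> i = pos Y p)" for i
    using A B by auto
  have "(LEAST i. i < length p \<and> p ! i \<in> X \<union> Y) = min (pos X p) (pos Y p)"
  proof (rule Least_equality)
    show "min (pos X p) (pos Y p) < length p \<and> p ! min (pos X p) (pos Y p) \<in> X \<union> Y"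
      using iff[of "min (pos X p) (pos Y p)"] by (metis min_def)
    fix y assume "y < length p \<and> p ! y \<in> X \<union> Y"
    then show "min (pos X p) (pos Y p) \<le> y" using iff[of y] by linarith
  qed
  moreover have "(GREATEST i. i < length p \<and> p ! i \<in> X \<union> Y) = max (pos X p) (pos Y p)"
  proof (rule Greatest_equality)
    show "max (pos X p) (pos Y p) < length p \<and> p ! max (pos X p) (pos Y p) \<in> X \<union> Y"
      using iff[of "max (pos X p) (pos Y p)"] by (metis max_def)
    fix y assume "y < length p \<and> p ! y \<in> X \<union> Y"
    then show "y \<le> max (pos X p) (pos Y p)" using iff[of y] by linarith
  qed
  ultimately show ?thesis unfolding first_in_def last_in_def by simp
qed

lemma dcov_formula:
  assumes finP: "finite P" and dist: "\<forall>p\<in>P. distinct p"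
    and disj: "\<forall>p\<in>P. \<forall>q\<in>P. p \<noteq> q \<longrightarrow> set p \<inter> set q = {}"
    and EA: "(\<Union>p\<in>P. set p) \<subseteq> arcs G"
    and len: "length C = k" and sub: "\<forall>i<k. C ! i \<subseteq> (\<Union>p\<in>P. set p)"
    and pa: "\<forall>p\<in>P. \<forall>i<k. a p i < length p \<and> (\<forall>j<length p. p ! j \<in> C ! i \<longleftrightarrow> j = a p i)"
  shows "d_cov G C = (\<Sum>p\<in>P. k - card (a p ` {..<k}))"
proof -
  let ?E = "\<Union>p\<in>P. set p"
  let ?g = "\<lambda>e. mult e C - 1"
  have multc: "mult e C = card {i. i < k \<and> e \<in> C ! i}" for e
    unfolding mult_def length_filter_conv_card len by simp
  have finE: "finite ?E" using finP by auto
  have "d_cov G C = (\<Sum>e\<in>?E. ?g e)"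
    unfolding d_cov_def
  proof (rule sum.mono_neutral_left[OF finE])
    show "E_shr G C \<subseteq> ?E"
    proof
      fix e assume "e \<in> E_shr G C"
      then have "2 \<le> card {i. i < k \<and> e \<in> C ! i}" unfolding E_shr_def multc by simp
      then have "{i. i < k \<and> e \<in> C ! i} \<noteq> {}" by (metis card.empty not_numeral_le_zero)
      then obtain i where "i < k" "e \<in> C ! i" by auto
      then show "e \<in> ?E" using sub by blast
    qed
    show "\<forall>e\<in>?E - E_shr G C. mult e C - 1 = 0"
      using EA unfolding E_shr_def by auto
  qed
  also have "\<dots> = (\<Sum>p\<in>P. \<Sum>e\<in>set p. ?g e)"
    by (rule sum.UNION_disjoint) (use finP disj in auto)
  also have "\<dots> = (\<Sum>p\<in>P. k - card (a p ` {..<k}))"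
  proof (rule sum.cong[OF refl])
    fix p assume pP: "p \<in> P"
    have ip: "inj_on (nth p) {..<length p}" using dist pP by (intro inj_on_nth) auto
    have sp: "set p = nth p ` {..<length p}" by (auto simp: set_conv_nth)
    have "(\<Sum>e\<in>set p. ?g e) = (\<Sum>j<length p. ?g (p ! j))"
      unfolding sp by (rule sum.reindex[OF ip, unfolded comp_def])
    also have "\<dots> = (\<Sum>j<length p. card {i. i < k \<and> a p i = j} - 1)"
    proof (rule sum.cong[OF refl])
      fix j assume "j \<in> {..<length p}"
      then have "{i. i < k \<and> p ! j \<in> C ! i} = {i. i < k \<and> a p i = j}"
        using pa pP by auto
      then show "?g (p ! j) = card {i. i < k \<and> a p i = j} - 1" unfolding multc by simp
    qed
    also have "\<dots> = k - card (a p ` {..<k})"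
      by (rule count_sum) (use pa pP in auto)
    finally show "(\<Sum>e\<in>set p. ?g e) = k - card (a p ` {..<k})" .
  qed
  finally show ?thesis .
qed


lemma (in fin_digraph) cut_struct:
  assumes sV: "s \<in> verts G" and st: "s \<noteq> t" and mx: "max_edge_disjoint_paths G s t P"
    and XM: "X \<in> min_cuts G s t"
  shows "X \<subseteq> (\<Union>p\<in>P. set p) \<and> (\<forall>p\<in>P. \<exists>e. X \<inter> set p = {e})"
proof -
  obtain Z where Z: "is_st_cut G s t Z" "card Z \<le> card P" using small_cut[OF sV st mx] by blast
  have Xc: "is_st_cut G s t X" "card X \<le> card Z" using XM Z(1) unfolding min_cuts_def by auto
  have finX: "finite X" using Xc(1) unfolding is_st_cut_def using finite_subset finite_arcs by blast
  have finP: "finite P" and edp: "edge_disjoint_paths G s t P" using mx unfolding max_edge_disjoint_paths_def by auto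
  have disP: "\<forall>p\<in>P. \<forall>q\<in>P. p \<noteq> q \<longrightarrow> set p \<inter> set q = {}" using edp unfolding edge_disjoint_paths_def by auto
  have ne: "X \<inter> set p \<noteq> {}" if "p \<in> P" for p
    using Xc(1) edp that unfolding is_st_cut_def edge_disjoint_paths_def by blast
  define f where "f p = (SOME e. e \<in> X \<inter> set p)" for p
  have fP: "f p \<in> X \<inter> set p" if "p \<in> P" for p
    unfolding f_def using ne[OF that] by (metis ex_in_conv someI_ex)
  have inj: "inj_on f P"
  proof (rule inj_onI)
    fix p q assume "p \<in> P" "q \<in> P" "f p = f q"
    then have "f p \<in> set p \<inter> set q" using fP by (metis IntD2 IntI)
    then show "p = q" using disP \<open>p \<in> P\<close> \<open>q \<in> P\<close> by blast
  qed
  have sub: "f ` P \<subseteq> X" using fP by auto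
  have "card (f ` P) = card P" using card_image[OF inj] .
  then have "card (f ` P) = card X" using card_mono[OF finX sub] Xc(2) Z(2) by linarith
  then have fX: "f ` P = X" using card_subset_eq[OF finX sub] by simp
  have "X \<subseteq> (\<Union>p\<in>P. set p)" using fX fP by auto
  moreover have "X \<inter> set p = {f p}" if pP: "p \<in> P" for p
  proof
    show "{f p} \<subseteq> X \<inter> set p" using fP[OF pP] by auto
    show "X \<inter> set p \<subseteq> {f p}"
    proof
      fix e assume e: "e \<in> X \<inter> set p"
      then obtain q where q: "q \<in> P" "e = f q" using fX by auto
      then have "e \<in> set q" using fP by auto
      then have "q = p" using disP e q pP by blast
      then show "e \<in> {f p}" using q by simp
    qed
  qed
  ultimately show ?thesis by blast
qed

theorem theorem7:
  fixes G :: "('a,'b) pre_digraph" and s t :: 'a and k :: nat and P :: "'b list set"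
    and C1 C2 :: "'b set list"
  assumes "fin_digraph G" and "s \<in> verts G" and "t \<in> verts G" and "k \<ge> 1"
    and "max_edge_disjoint_paths G s t P"
    and "C1 \<in> U_lr G s t k" and "C2 \<in> U_lr G s t k"
  shows "d_cov G (tuple_join P C1 C2) + d_cov G (tuple_meet P C1 C2) \<le> d_cov G C1 + d_cov G C2"
proof -
  interpret fin_digraph G by fact
  note sV = assms(2) and mx = assms(5)
  have lC1: "length C1 = k" and sC1: "set C1 \<subseteq> min_cuts G s t"
    and oC1: "\<forall>i j. i < j \<and> j < k \<longrightarrow> cut_le G s t (C1 ! i) (C1 ! j)"
    using assms(6) unfolding U_lr_def by auto
  have lC2: "length C2 = k" and sC2: "set C2 \<subseteq> min_cuts G s t"
    and oC2: "\<forall>i j. i < j \<and> j < k \<longrightarrow> cut_le G s t (C2 ! i) (C2 ! j)"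
    using assms(7) unfolding U_lr_def by auto
  have M1: "C1 ! i \<in> min_cuts G s t" if "i < k" for i using sC1 lC1 that nth_mem by blast
  have M2: "C2 ! i \<in> min_cuts G s t" if "i < k" for i using sC2 lC2 that nth_mem by blast
  have st: "s \<noteq> t"
  proof
    assume "s = t"
    have "st_path G s t []" unfolding st_path_def using sV \<open>s = t\<close> by (simp add: apath_Nil_iff)
    then show False using M1[of 0] assms(4) unfolding min_cuts_def is_st_cut_def by auto
  qed
  have finP: "finite P" and edp: "edge_disjoint_paths G s t P" using mx unfolding max_edge_disjoint_paths_def by auto
  have disP: "\<forall>p\<in>P. \<forall>q\<in>P. p \<noteq> q \<longrightarrow> set p \<inter> set q = {}" using edp unfolding edge_disjoint_paths_def by auto
  have apP: "apath s p t" if "p \<in> P" for p using edp that unfolding edge_disjoint_paths_def st_path_def by auto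
  have distP: "\<forall>p\<in>P. distinct p" using apP distinct_verts_imp_distinct unfolding apath_def by blast
  have EA: "(\<Union>p\<in>P. set p) \<subseteq> arcs G" using apP by (auto simp: apath_def awalk_def)
  note CS = cut_struct[OF sV st mx]
  define a where "a p i = pos (C1 ! i) p" for p i
  define b where "b p i = pos (C2 ! i) p" for p i
  have posX: "\<forall>p\<in>P. pos X p < length p \<and> (\<forall>j<length p. p ! j \<in> X \<longleftrightarrow> j = pos X p)"
    if XM: "X \<in> min_cuts G s t" for X
  proof
    fix p assume pP: "p \<in> P"
    obtain e where "X \<inter> set p = {e}" using CS[OF XM] pP by blast
    then show "pos X p < length p \<and> (\<forall>j<length p. p ! j \<in> X \<longleftrightarrow> j = pos X p)"
      using pos_unique[of p X e] distP pP by auto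
  qed
  have PA: "\<forall>p\<in>P. \<forall>i<k. a p i < length p \<and> (\<forall>j<length p. p ! j \<in> C1 ! i \<longleftrightarrow> j = a p i)"
    unfolding a_def using posX M1 by blast
  have PB: "\<forall>p\<in>P. \<forall>i<k. b p i < length p \<and> (\<forall>j<length p. p ! j \<in> C2 ! i \<longleftrightarrow> j = b p i)"
    unfolding b_def using posX M2 by blast
  have monoX: "pos X p \<le> pos Y p" if H: "X \<in> min_cuts G s t" "Y \<in> min_cuts G s t" "cut_le G s t X Y" "p \<in> P" for X Y p
  proof -
    have "st_path G s t p" using apP H(4) unfolding st_path_def by blast
    then obtain i where i: "i < length p" "p ! i \<in> X" "\<forall>j<i. p ! j \<notin> Y"
      using H(3) unfolding cut_le_def by blast
    have "i = pos X p" using posX[OF H(1)] H(4) i by blast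
    moreover have "p ! pos Y p \<in> Y" using posX[OF H(2)] H(4) by blast
    ultimately show ?thesis using i(3) by (meson not_le)
  qed
  have monoA: "\<forall>i j. i \<le> j \<longrightarrow> j < k \<longrightarrow> a p i \<le> a p j" if "p \<in> P" for p
  proof (intro allI impI)
    fix i j assume "i \<le> j" "j < k"
    then show "a p i \<le> a p j" unfolding a_def
      using monoX[OF M1 M1 _ that, of i j] oC1 by (cases "i = j") auto
  qed
  have monoB: "\<forall>i j. i \<le> j \<longrightarrow> j < k \<longrightarrow> b p i \<le> b p j" if "p \<in> P" for p
  proof (intro allI impI)
    fix i j assume "i \<le> j" "j < k"
    then show "b p i \<le> b p j" unfolding b_def
      using monoX[OF M2 M2 _ that, of i j] oC2 by (cases "i = j") auto
  qed
  have subC1: "\<forall>i<k. C1 ! i \<subseteq> (\<Union>p\<in>P. set p)" using CS M1 by blast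
  have subC2: "\<forall>i<k. C2 ! i \<subseteq> (\<Union>p\<in>P. set p)" using CS M2 by blast
  have FL: "first_in (C1 ! i \<union> C2 ! i) q = q ! min (a q i) (b q i)
       \<and> last_in (C1 ! i \<union> C2 ! i) q = q ! max (a q i) (b q i)" if iq: "i < k" "q \<in> P" for i q
  proof -
    obtain x where x: "C1 ! i \<inter> set q = {x}" using CS[OF M1[OF iq(1)]] iq(2) by blast
    obtain y where y: "C2 ! i \<inter> set q = {y}" using CS[OF M2[OF iq(1)]] iq(2) by blast
    show ?thesis unfolding a_def b_def using first_last[OF _ x y] distP iq(2) by blast
  qed
  define J where "J = tuple_join P C1 C2"
  define M where "M = tuple_meet P C1 C2"
  have lJ: "length J = k" and lM: "length M = k" unfolding J_def M_def tuple_join_def tuple_meet_def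
    using lC1 lC2 by auto
  have Ji: "J ! i = (\<lambda>q. q ! max (a q i) (b q i)) ` P" if "i < k" for i
  proof -
    have "J ! i = S_max P (C1 ! i \<union> C2 ! i)" unfolding J_def tuple_join_def using that lC1 lC2 by simp
    also have "\<dots> = (\<lambda>q. q ! max (a q i) (b q i)) ` P" unfolding S_max_def
      using FL[OF that] by (intro image_cong) auto
    finally show ?thesis .
  qed
  have Mi: "M ! i = (\<lambda>q. q ! min (a q i) (b q i)) ` P" if "i < k" for i
  proof -
    have "M ! i = S_min P (C1 ! i \<union> C2 ! i)" unfolding M_def tuple_meet_def using that lC1 lC2 by simp
    also have "\<dots> = (\<lambda>q. q ! min (a q i) (b q i)) ` P" unfolding S_min_def
      using FL[OF that] by (intro image_cong) auto
    finally show ?thesis .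
  qed
  have img: "\<forall>p\<in>P. \<forall>i<k. c p i < length p \<and> (\<forall>j<length p. p ! j \<in> (\<lambda>q. q ! c q i) ` P \<longleftrightarrow> j = c p i)"
    if cl: "\<forall>p\<in>P. \<forall>i<k. c p i < length p" for c :: "'b list \<Rightarrow> nat \<Rightarrow> nat"
  proof (intro ballI allI impI conjI)
    fix p i assume "p \<in> P" "i < k"
    then show "c p i < length p" using cl by blast
  next
    fix p i j assume pP: "p \<in> P" and i: "i < k" and j: "j < length p"
    show "p ! j \<in> (\<lambda>q. q ! c q i) ` P \<longleftrightarrow> j = c p i"
    proof
      assume "p ! j \<in> (\<lambda>q. q ! c q i) ` P"
      then obtain q where q: "q \<in> P" "p ! j = q ! c q i" by auto
      have "q ! c q i \<in> set q" using cl q(1) i by auto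
      moreover have "p ! j \<in> set p" using j by auto
      ultimately have "q = p" using disP q pP by (metis disjoint_iff)
      then show "j = c p i" using q j cl pP i distP by (metis nth_eq_iff_index_eq)
    next
      assume "j = c p i" then show "p ! j \<in> (\<lambda>q. q ! c q i) ` P" using pP by blast
    qed
  qed
  have imgsub: "(\<lambda>q. q ! c q i) ` P \<subseteq> (\<Union>p\<in>P. set p)"
    if cl: "\<forall>p\<in>P. \<forall>i<k. c p i < length p" and i: "i < k" for c :: "'b list \<Rightarrow> nat \<Rightarrow> nat" and i
    using cl i by auto
  let ?mx = "\<lambda>q i. max (a q i) (b q i)" and ?mn = "\<lambda>q i. min (a q i) (b q i)"
  have clM: "\<forall>p\<in>P. \<forall>i<k. ?mx p i < length p" using PA PB by simp
  have clm: "\<forall>p\<in>P. \<forall>i<k. ?mn p i < length p" using PA PB by (simp add: min_less_iff_disj)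
  have dJ: "d_cov G J = (\<Sum>p\<in>P. k - card (?mx p ` {..<k}))"
  proof (rule dcov_formula[OF finP distP disP EA lJ])
    show "\<forall>i<k. J ! i \<subseteq> (\<Union>p\<in>P. set p)" using Ji imgsub[OF clM] by simp
    show "\<forall>p\<in>P. \<forall>i<k. ?mx p i < length p \<and> (\<forall>j<length p. p ! j \<in> J ! i \<longleftrightarrow> j = ?mx p i)"
      using Ji img[OF clM] by simp
  qed
  have dM: "d_cov G M = (\<Sum>p\<in>P. k - card (?mn p ` {..<k}))"
  proof (rule dcov_formula[OF finP distP disP EA lM])
    show "\<forall>i<k. M ! i \<subseteq> (\<Union>p\<in>P. set p)" using Mi imgsub[OF clm] by simp
    show "\<forall>p\<in>P. \<forall>i<k. ?mn p i < length p \<and> (\<forall>j<length p. p ! j \<in> M ! i \<longleftrightarrow> j = ?mn p i)"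
      using Mi img[OF clm] by simp
  qed
  have d1: "d_cov G C1 = (\<Sum>p\<in>P. k - card (a p ` {..<k}))"
    by (rule dcov_formula[OF finP distP disP EA lC1 subC1 PA])
  have d2: "d_cov G C2 = (\<Sum>p\<in>P. k - card (b p ` {..<k}))"
    by (rule dcov_formula[OF finP distP disP EA lC2 subC2 PB])
  have "d_cov G J + d_cov G M = (\<Sum>p\<in>P. (k - card (?mx p ` {..<k})) + (k - card (?mn p ` {..<k})))"
    unfolding dJ dM by (simp add: sum.distrib)
  also have "\<dots> \<le> (\<Sum>p\<in>P. (k - card (a p ` {..<k})) + (k - card (b p ` {..<k})))"
  proof (rule sum_mono)
    fix p assume pP: "p \<in> P"
    have ineq: "card (a p ` {..<k}) + card (b p ` {..<k}) \<le> card (?mx p ` {..<k}) + card (?mn p ` {..<k})"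
      using mono_card_ineq[OF monoA[OF pP] monoB[OF pP], of k] by simp
    have "card (?mx p ` {..<k}) \<le> k" "card (?mn p ` {..<k}) \<le> k"
      "card (a p ` {..<k}) \<le> k" "card (b p ` {..<k}) \<le> k"
      using card_image_le[of "{..<k}"] by fastforce+
    then show "(k - card (?mx p ` {..<k})) + (k - card (?mn p ` {..<k}))
        \<le> (k - card (a p ` {..<k})) + (k - card (b p ` {..<k}))" using ineq by linarith
  qed
  also have "\<dots> = d_cov G C1 + d_cov G C2" unfolding d1 d2 by (simp add: sum.distrib)
  finally show ?thesis unfolding J_def M_def .
qed

end
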